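(* Let $\underline{\mu}\le\overline{\mu}$ be real numbers and $p(a)=\sup_{y\in[\underline{\mu},\overline{\mu}]}(ya)$. Let $\phi:\mathbb{R}\to\mathbb{R}$ satisfy $|\phi(x)-\phi(y)|\le|x-y|$ for all $x,y$, and set $v(x,t)=\sup_{y\in[\underline{\mu},\overline{\mu}]}\phi(x+ty)$ for $(x,t)\in\mathbb{R}\times[0,\infty)$. Let $\varepsilon\in(0,1)$ and $v_\varepsilon=v*\zeta_\varepsilon$. Then $$f_\varepsilon(x,t):=\partial_tv_\varepsilon(x,t)-p(\partial_xv_\varepsilon(x,t))\ge0\quad\text{for all }(x,t)\in\mathbb{R}\times(\varepsilon,\infty).$$
   Context: $\zeta\in C_0^\infty(\mathbb{R}^2)$ is a fixed nonnegative function with unit integral and support in $\{(x,t):|x|<1,\ 0<t<1\}$; for $\varepsilon\in(0,1)$, $\zeta_\varepsilon(x,t)=\varepsilon^{-2}\zeta(x/\varepsilon,t/\varepsilon)$, and for a locally summable $u(x,t)$, $u*\zeta_\varepsilon(x,t)=\int u(x-y,t-s)\zeta_\varepsilon(y,s)\,dy\,ds$ (convolution in $(x,t)$). *)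

theory Defs
  imports "HOL-Analysis.Analysis"
begin

text \<open>C-infinity functions on R^2: greatest set of functions that are (Frechet)
  differentiable everywhere and whose two partial derivatives are again in the set.\<close>
coinductive C_inf :: "(real \<times> real \<Rightarrow> real) \<Rightarrow> bool" where
  "(\<And>z. (f has_derivative (\<lambda>h. fst h * g1 z + snd h * g2 z)) (at z))
   \<Longrightarrow> C_inf g1 \<Longrightarrow> C_inf g2 \<Longrightarrow> C_inf f"

definition zeta_eps :: "(real \<times> real \<Rightarrow> real) \<Rightarrow> real \<Rightarrow> real \<times> real \<Rightarrow> real" where
  "zeta_eps \<zeta> \<epsilon> = (\<lambda>(x, t). \<zeta> (x / \<epsilon>, t / \<epsilon>) / \<epsilon>\<^sup>2)"

definition conv2 :: "(real \<Rightarrow> real \<Rightarrow> real) \<Rightarrow> (real \<times> real \<Rightarrow> real) \<Rightarrow> real \<Rightarrow> real \<Rightarrow> real" where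
  "conv2 u k x t = integral UNIV (\<lambda>(y, s). u (x - y) (t - s) * k (y, s))"

definition hamil :: "real \<Rightarrow> real \<Rightarrow> real \<Rightarrow> real" where
  "hamil mu_lo mu_hi a = (SUP y\<in>{mu_lo..mu_hi}. y * a)"

definition vsol :: "real \<Rightarrow> real \<Rightarrow> (real \<Rightarrow> real) \<Rightarrow> real \<Rightarrow> real \<Rightarrow> real" where
  "vsol mu_lo mu_hi \<phi> x t = (SUP y\<in>{mu_lo..mu_hi}. \<phi> (x + t * y))"

end

theory Submission
  imports Defs
begin


lemma V_bdd:
  fixes \<phi> :: "real \<Rightarrow> real"
  assumes lip: "\<forall>a b. \<bar>\<phi> a - \<phi> b\<bar> \<le> \<bar>a - b\<bar>"
  shows "bdd_above ((\<lambda>y. \<phi> (x + t * y)) ` {mu_lo..mu_hi})"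
proof -
  let ?M = "\<bar>mu_lo\<bar> + \<bar>mu_hi\<bar>"
  have "\<phi> (x + t * y) \<le> \<phi> 0 + \<bar>x\<bar> + \<bar>t\<bar> * ?M" if "y \<in> {mu_lo..mu_hi}" for y
  proof -
    have "\<phi> (x + t * y) - \<phi> 0 \<le> \<bar>x + t*y\<bar>" using lip[rule_format, of "x+t*y" 0] by simp
    also have "\<dots> \<le> \<bar>x\<bar> + \<bar>t\<bar> * \<bar>y\<bar>" using abs_triangle_ineq[of x "t*y"] by (simp add: abs_mult)
    also have "\<bar>t\<bar> * \<bar>y\<bar> \<le> \<bar>t\<bar> * ?M" using that by (intro mult_left_mono) auto
    finally show ?thesis by simp
  qed
  then show ?thesis by (intro bdd_aboveI[where M="\<phi> 0 + \<bar>x\<bar> + \<bar>t\<bar> * ?M"]) auto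
qed

lemma V_lip:
  fixes \<phi> :: "real \<Rightarrow> real"
  assumes mu: "mu_lo \<le> mu_hi" and lip: "\<forall>a b. \<bar>\<phi> a - \<phi> b\<bar> \<le> \<bar>a - b\<bar>"
  shows "vsol mu_lo mu_hi \<phi> x t \<le> vsol mu_lo mu_hi \<phi> x' t' + (1 + \<bar>mu_lo\<bar> + \<bar>mu_hi\<bar>) * dist (x,t) (x',t')"
proof -
  let ?M = "\<bar>mu_lo\<bar> + \<bar>mu_hi\<bar>"
  let ?d = "dist (x,t) (x',t')"
  have dx: "\<bar>x - x'\<bar> \<le> ?d" using dist_fst_le[of "(x,t)" "(x',t')"] by (simp add: dist_real_def)
  have dt: "\<bar>t - t'\<bar> \<le> ?d" using dist_snd_le[of "(x,t)" "(x',t')"] by (simp add: dist_real_def)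
  have ne: "{mu_lo..mu_hi} \<noteq> {}" using mu by auto
  show ?thesis unfolding vsol_def
  proof (rule cSUP_least[OF ne])
    fix y assume y: "y \<in> {mu_lo..mu_hi}"
    have 1: "\<phi> (x + t * y) \<le> \<phi> (x' + t' * y) + \<bar>(x + t*y) - (x' + t'*y)\<bar>"
      using lip[rule_format, of "x + t*y" "x' + t'*y"] by linarith
    have 2: "\<bar>(x + t*y) - (x' + t'*y)\<bar> \<le> \<bar>x - x'\<bar> + \<bar>t - t'\<bar> * \<bar>y\<bar>"
    proof -
      have "(x + t*y) - (x' + t'*y) = (x - x') + (t - t') * y" by (simp add: algebra_simps)
      then show ?thesis using abs_triangle_ineq[of "x - x'" "(t - t') * y"] by (simp add: abs_mult)
    qed
    have 3: "\<bar>t - t'\<bar> * \<bar>y\<bar> \<le> ?d * ?M" using y dt by (intro mult_mono) auto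
    have 4: "\<phi> (x' + t' * y) \<le> (SUP y\<in>{mu_lo..mu_hi}. \<phi> (x' + t' * y))"
      by (rule cSUP_upper[OF y V_bdd[OF lip]])
    show "\<phi> (x + t * y) \<le> (SUP y\<in>{mu_lo..mu_hi}. \<phi> (x' + t' * y)) + (1 + \<bar>mu_lo\<bar> + \<bar>mu_hi\<bar>) * ?d"
      using 1 2 3 4 dx by (simp add: algebra_simps)
  qed
qed

lemma V_cont:
  fixes \<phi> :: "real \<Rightarrow> real"
  assumes mu: "mu_lo \<le> mu_hi" and lip: "\<forall>a b. \<bar>\<phi> a - \<phi> b\<bar> \<le> \<bar>a - b\<bar>"
  shows "continuous_on UNIV (\<lambda>p. vsol mu_lo mu_hi \<phi> (fst p) (snd p))"
proof (rule lipschitz_on_continuous_on)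
  show "(1 + \<bar>mu_lo\<bar> + \<bar>mu_hi\<bar>)-lipschitz_on UNIV (\<lambda>p. vsol mu_lo mu_hi \<phi> (fst p) (snd p))"
  proof (rule lipschitz_onI)
    fix p q :: "real \<times> real"
    have 1: "vsol mu_lo mu_hi \<phi> (fst p) (snd p) \<le> vsol mu_lo mu_hi \<phi> (fst q) (snd q) + (1 + \<bar>mu_lo\<bar> + \<bar>mu_hi\<bar>) * dist p q"
      using V_lip[OF mu lip, of "fst p" "snd p" "fst q" "snd q"] by simp
    have 2: "vsol mu_lo mu_hi \<phi> (fst q) (snd q) \<le> vsol mu_lo mu_hi \<phi> (fst p) (snd p) + (1 + \<bar>mu_lo\<bar> + \<bar>mu_hi\<bar>) * dist p q"
      using V_lip[OF mu lip, of "fst q" "snd q" "fst p" "snd p"] by (simp add: dist_commute)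
    show "dist (vsol mu_lo mu_hi \<phi> (fst p) (snd p)) (vsol mu_lo mu_hi \<phi> (fst q) (snd q)) \<le> (1 + \<bar>mu_lo\<bar> + \<bar>mu_hi\<bar>) * dist p q"
      using 1 2 by (simp add: dist_real_def abs_le_iff)
  qed simp
qed

lemma V_semi:
  fixes \<phi> :: "real \<Rightarrow> real"
  assumes mu: "mu_lo \<le> mu_hi" and lip: "\<forall>a b. \<bar>\<phi> a - \<phi> b\<bar> \<le> \<bar>a - b\<bar>"
    and t: "0 \<le> t" and h: "0 \<le> h" and a: "a \<in> {mu_lo..mu_hi}"
  shows "vsol mu_lo mu_hi \<phi> (x + h * a) t \<le> vsol mu_lo mu_hi \<phi> x (t + h)"
  unfolding vsol_def
proof (rule cSUP_least)
  show "{mu_lo..mu_hi} \<noteq> {}" using mu by auto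
  fix y assume y: "y \<in> {mu_lo..mu_hi}"
  obtain y' where y': "y' \<in> {mu_lo..mu_hi}" "h * a + t * y = (t + h) * y'"
  proof (cases "t + h = 0")
    case True
    then have "t = 0" "h = 0" using t h by auto
    then show ?thesis using that[of a] a by simp
  next
    case False
    then have pos: "t + h > 0" using t h by auto
    let ?y = "(h * a + t * y) / (t + h)"
    have "h * mu_lo \<le> h * a" "t * mu_lo \<le> t * y" "h * a \<le> h * mu_hi" "t * y \<le> t * mu_hi"
      using a y t h by (auto intro: mult_left_mono)
    then have "(t+h) * mu_lo \<le> h * a + t * y" "h * a + t * y \<le> (t+h) * mu_hi"
      by (simp_all add: distrib_right)
    then have "?y \<in> {mu_lo..mu_hi}" using pos by (auto simp: field_simps)
    then show ?thesis using that[of ?y] pos by simp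
  qed
  have "\<phi> (x + h * a + t * y) = \<phi> (x + (t + h) * y')" using y' by (simp add: add.assoc)
  also have "\<dots> \<le> (SUP y\<in>{mu_lo..mu_hi}. \<phi> (x + (t + h) * y))"
    by (rule cSUP_upper[OF y'(1) V_bdd[OF lip]])
  finally show "\<phi> (x + h * a + t * y) \<le> (SUP y\<in>{mu_lo..mu_hi}. \<phi> (x + (t + h) * y))" .
qed



lemma C_inf_cont: "C_inf f \<Longrightarrow> continuous_on UNIV f"
proof (erule C_inf.cases)
  fix fa g1 g2
  assume "f = fa" "\<And>z. (fa has_derivative (\<lambda>h. fst h * g1 z + snd h * g2 z)) (at z)"
  then show "continuous_on UNIV f"
    by (metis continuous_at_imp_continuous_on has_derivative_continuous)
qed

lemma C_inf_der:
  assumes "C_inf f"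
  obtains g1 g2 where "\<And>z. (f has_derivative (\<lambda>h. fst h * g1 z + snd h * g2 z)) (at z)"
    "continuous_on UNIV g1" "continuous_on UNIV g2"
  using assms by (cases rule: C_inf.cases) (auto intro: C_inf_cont)

lemma part2:
  assumes "\<And>z. (f has_derivative (\<lambda>h. fst h * g1 z + snd h * g2 z)) (at z)"
  shows "((\<lambda>s. f (c, s)) has_real_derivative g2 (c, s)) (at s)"
proof -
  have p: "((\<lambda>s. (c, s)) has_derivative (\<lambda>h. (0, h))) (at s)"
    by (intro has_derivative_Pair has_derivative_const has_derivative_ident)
  have "((\<lambda>s. f (c, s)) has_derivative (\<lambda>h. fst (0::real, h) * g1 (c,s) + snd (0::real, h) * g2 (c,s))) (at s)"
    by (rule has_derivative_compose[OF p assms])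
  moreover have "(\<lambda>h. h * g2 (c,s)) = (*) (g2 (c,s))" by (auto simp: fun_eq_iff)
  ultimately show ?thesis by (simp add: has_field_derivative_def)
qed

lemma part1:
  assumes "\<And>z. (f has_derivative (\<lambda>h. fst h * g1 z + snd h * g2 z)) (at z)"
  shows "((\<lambda>s. f (s, c)) has_real_derivative g1 (s, c)) (at s)"
proof -
  have p: "((\<lambda>s. (s, c)) has_derivative (\<lambda>h. (h, 0))) (at s)"
    by (intro has_derivative_Pair has_derivative_const has_derivative_ident)
  have "((\<lambda>s. f (s, c)) has_derivative (\<lambda>h. fst (h, 0::real) * g1 (s,c) + snd (h, 0::real) * g2 (s,c))) (at s)"
    by (rule has_derivative_compose[OF p assms])
  moreover have "(\<lambda>h. h * g1 (s,c)) = (*) (g1 (s,c))" by (auto simp: fun_eq_iff)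
  ultimately show ?thesis by (simp add: has_field_derivative_def)
qed

lemma K_dt:
  assumes "\<And>z. (f has_derivative (\<lambda>h. fst h * g1 z + snd h * g2 z)) (at z)" and e: "\<epsilon> \<noteq> 0"
  shows "((\<lambda>s. zeta_eps f \<epsilon> (a, s - b)) has_real_derivative g2 (a/\<epsilon>, (s-b)/\<epsilon>) * (1/\<epsilon>) / \<epsilon>\<^sup>2) (at s)"
proof -
  have i: "((\<lambda>s. (s - b)/\<epsilon>) has_real_derivative 1/\<epsilon>) (at s)"
    using e by (auto intro!: derivative_eq_intros)
  have "((\<lambda>s. f (a/\<epsilon>, (s - b)/\<epsilon>)) has_real_derivative g2 (a/\<epsilon>, (s-b)/\<epsilon>) * (1/\<epsilon>)) (at s)"
    by (rule DERIV_chain2[OF part2[OF assms(1)] i])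
  then show ?thesis unfolding zeta_eps_def case_prod_conv by (rule DERIV_cdivide)
qed

lemma K_dx:
  assumes "\<And>z. (f has_derivative (\<lambda>h. fst h * g1 z + snd h * g2 z)) (at z)" and e: "\<epsilon> \<noteq> 0"
  shows "((\<lambda>s. zeta_eps f \<epsilon> (s - a, b)) has_real_derivative g1 ((s-a)/\<epsilon>, b/\<epsilon>) * (1/\<epsilon>) / \<epsilon>\<^sup>2) (at s)"
proof -
  have i: "((\<lambda>s. (s - a)/\<epsilon>) has_real_derivative 1/\<epsilon>) (at s)"
    using e by (auto intro!: derivative_eq_intros)
  have "((\<lambda>s. f ((s - a)/\<epsilon>, b/\<epsilon>)) has_real_derivative g1 ((s-a)/\<epsilon>, b/\<epsilon>) * (1/\<epsilon>)) (at s)"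
    by (rule DERIV_chain2[OF part1[OF assms(1)] i])
  then show ?thesis unfolding zeta_eps_def case_prod_conv by (rule DERIV_cdivide)
qed


lemma K_supp:
  assumes zeta_supp: "closure {z. \<zeta> z \<noteq> 0} \<subseteq> {(y, s). \<bar>y\<bar> < 1 \<and> 0 < s \<and> s < 1}"
    and e: "0 < \<epsilon>" and nz: "zeta_eps \<zeta> \<epsilon> (a, b) \<noteq> 0"
  shows "\<bar>a\<bar> < \<epsilon> \<and> 0 < b \<and> b < \<epsilon>"
proof -
  have "\<zeta> (a/\<epsilon>, b/\<epsilon>) \<noteq> 0" using nz unfolding zeta_eps_def case_prod_conv by simp
  then have "(a/\<epsilon>, b/\<epsilon>) \<in> {z. \<zeta> z \<noteq> 0}" by simp
  then have "(a/\<epsilon>, b/\<epsilon>) \<in> closure {z. \<zeta> z \<noteq> 0}" using closure_subset by (rule subsetD[rotated])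
  then have "(a/\<epsilon>, b/\<epsilon>) \<in> {(y, s). \<bar>y\<bar> < 1 \<and> 0 < s \<and> s < 1}" using zeta_supp by (rule subsetD[rotated])
  then have h: "\<bar>a/\<epsilon>\<bar> < 1" "0 < b/\<epsilon>" "b/\<epsilon> < 1" by simp_all
  have "\<bar>a\<bar> / \<epsilon> < 1" using h(1) e by (simp add: abs_div)
  then have 1: "\<bar>a\<bar> < \<epsilon>" using e by (simp add: divide_less_eq)
  have 2: "0 < b" using h(2) e by (simp add: zero_less_divide_iff)
  have 3: "b < \<epsilon>" using h(3) e by (simp add: divide_less_eq)
  show ?thesis using 1 2 3 by blast
qed

lemma K_cont:
  assumes c: "continuous_on UNIV \<zeta>" and e: "\<epsilon> \<noteq> 0"
  shows "continuous_on UNIV (zeta_eps \<zeta> \<epsilon>)"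
proof -
  have "continuous_on UNIV (\<lambda>p::real\<times>real. \<zeta> (fst p/\<epsilon>, snd p/\<epsilon>))"
    by (rule continuous_on_compose2[OF c]) (auto intro!: continuous_intros simp: e)
  then have "continuous_on UNIV (\<lambda>p::real\<times>real. \<zeta> (fst p/\<epsilon>, snd p/\<epsilon>) / \<epsilon>\<^sup>2)"
    by (intro continuous_on_divide continuous_on_const) (auto simp: e)
  moreover have "zeta_eps \<zeta> \<epsilon> = (\<lambda>p. \<zeta> (fst p/\<epsilon>, snd p/\<epsilon>) / \<epsilon>\<^sup>2)"
    by (auto simp: zeta_eps_def fun_eq_iff)
  ultimately show ?thesis by simp
qed

lemma conv_box:
  fixes V :: "real \<Rightarrow> real \<Rightarrow> real" and K :: "real \<times> real \<Rightarrow> real"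
  assumes cV: "continuous_on UNIV (\<lambda>p. V (fst p) (snd p))" and cK: "continuous_on UNIV K"
    and supp: "\<And>w. w \<notin> cbox a b \<Longrightarrow> K (x - fst w, s - snd w) = 0"
  shows "((\<lambda>(y,w). V (x-y) (s-w) * K (y,w)) has_integral
           integral (cbox a b) (\<lambda>w. V (fst w) (snd w) * K (x - fst w, s - snd w))) UNIV"
proof -
  define h where "h = (\<lambda>w::real\<times>real. V (fst w) (snd w) * K (x - fst w, s - snd w))"
  have cK2: "continuous_on UNIV (\<lambda>w::real\<times>real. K (x - fst w, s - snd w))"
    by (rule continuous_on_compose2[OF cK]) (auto intro!: continuous_intros)
  have ch: "continuous_on UNIV h" unfolding h_def by (intro continuous_on_mult cV cK2)
  have hi: "(h has_integral integral (cbox a b) h) (cbox a b)"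
  proof -
    have "h integrable_on cbox a b" by (rule integrable_continuous, rule continuous_on_subset[OF ch]) simp
    then show ?thesis by (rule integrable_integral)
  qed
  have aff: "((\<lambda>z. h ((-1) *\<^sub>R z + (x,s))) has_integral (1 / (\<bar>-1\<bar> ^ DIM(real\<times>real))) *\<^sub>R integral (cbox a b) h)
     ((\<lambda>z. (1 / -1) *\<^sub>R z + -((1 / -1) *\<^sub>R (x,s))) ` cbox a b)"
    by (rule has_integral_affinity[OF hi]) simp
  let ?S = "(\<lambda>z. (1 / -1) *\<^sub>R z + -((1 / -1) *\<^sub>R (x,s))) ` cbox a b"
  have aff2: "((\<lambda>z. h ((-1) *\<^sub>R z + (x,s))) has_integral integral (cbox a b) h) UNIV"
  proof (rule has_integral_on_superset[OF _ _ subset_UNIV])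
    show "((\<lambda>z. h ((-1) *\<^sub>R z + (x,s))) has_integral integral (cbox a b) h) ?S" using aff by simp
    fix z assume z: "z \<notin> ?S"
    have "(-1) *\<^sub>R z + (x,s) \<notin> cbox a b"
    proof
      assume "(-1) *\<^sub>R z + (x,s) \<in> cbox a b"
      then have "(\<lambda>z. (1 / -1) *\<^sub>R z + -((1 / -1) *\<^sub>R (x,s))) ((-1) *\<^sub>R z + (x,s)) \<in> ?S" by blast
      then show False using z by simp
    qed
    then have "K (x - fst ((-1) *\<^sub>R z + (x,s)), s - snd ((-1) *\<^sub>R z + (x,s))) = 0" by (rule supp)
    then show "h ((-1) *\<^sub>R z + (x,s)) = 0" unfolding h_def by simp
  qed
  have eq: "(\<lambda>z. h ((-1) *\<^sub>R z + (x,s))) = (\<lambda>(y,w). V (x-y) (s-w) * K (y,w))"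
    by (auto simp: h_def fun_eq_iff)
  have "((\<lambda>(y,w). V (x-y) (s-w) * K (y,w)) has_integral integral (cbox a b) h) UNIV"
    using aff2 by (simp only: eq)
  then show ?thesis by (simp only: h_def)
qed



lemma supp_box:
  assumes zeta_supp: "closure {z. \<zeta> z \<noteq> 0} \<subseteq> {(y, s). \<bar>y\<bar> < 1 \<and> 0 < s \<and> s < 1}"
    and e: "0 < \<epsilon>" "\<epsilon> < 1" and y: "\<bar>y - y0\<bar> < 1" and s: "\<bar>s - s0\<bar> < 1"
    and w: "w \<notin> cbox (y0 - 2, s0 - 2) (y0 + 2, s0 + 2)"
  shows "zeta_eps \<zeta> \<epsilon> (y - fst w, s - snd w) = 0"
proof (rule ccontr)
  assume "zeta_eps \<zeta> \<epsilon> (y - fst w, s - snd w) \<noteq> 0"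
  from K_supp[OF zeta_supp e(1) this] have "\<bar>y - fst w\<bar> < \<epsilon>" "0 < s - snd w" "s - snd w < \<epsilon>" by auto
  then have "fst w \<in> cbox (y0 - 2) (y0 + 2)" "snd w \<in> cbox (s0 - 2) (s0 + 2)"
    using e y s by (auto simp: cbox_interval abs_less_iff)
  then have "w \<in> cbox (y0 - 2, s0 - 2) (y0 + 2, s0 + 2)"
    by (metis cbox_Pair_iff prod.collapse)
  then show False using w by blast
qed



theorem lemma4p1:
  fixes \<zeta> :: "real \<times> real \<Rightarrow> real" and \<phi> :: "real \<Rightarrow> real"
    and mu_lo mu_hi \<epsilon> x t :: real
  assumes zeta_smooth: "C_inf \<zeta>"
    and zeta_nonneg: "\<forall>z. \<zeta> z \<ge> 0"
    and zeta_int: "(\<zeta> has_integral 1) UNIV"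
    and zeta_supp: "closure {z. \<zeta> z \<noteq> 0} \<subseteq> {(y, s). \<bar>y\<bar> < 1 \<and> 0 < s \<and> s < 1}"
    and mu: "mu_lo \<le> mu_hi"
    and lip: "\<forall>a b. \<bar>\<phi> a - \<phi> b\<bar> \<le> \<bar>a - b\<bar>"
    and eps: "0 < \<epsilon>" "\<epsilon> < 1"
    and t: "\<epsilon> < t"
  shows "deriv (\<lambda>s. conv2 (vsol mu_lo mu_hi \<phi>) (zeta_eps \<zeta> \<epsilon>) x s) t
           - hamil mu_lo mu_hi (deriv (\<lambda>y. conv2 (vsol mu_lo mu_hi \<phi>) (zeta_eps \<zeta> \<epsilon>) y t) x) \<ge> 0"
proof -
  obtain g1 g2 where gder: "\<And>z. (\<zeta> has_derivative (\<lambda>h. fst h * g1 z + snd h * g2 z)) (at z)"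
    and cg1: "continuous_on UNIV g1" and cg2: "continuous_on UNIV g2"
    using C_inf_der[OF zeta_smooth] by blast
  have ez: "\<epsilon> \<noteq> 0" using eps by simp
  define V where "V = vsol mu_lo mu_hi \<phi>"
  define K where "K = zeta_eps \<zeta> \<epsilon>"
  define Vp where "Vp = (\<lambda>w::real\<times>real. V (fst w) (snd w))"
  have cV: "continuous_on UNIV (\<lambda>p. V (fst p) (snd p))" unfolding V_def by (rule V_cont[OF mu lip])
  have cVp: "continuous_on UNIV Vp" using cV unfolding Vp_def .
  have cK: "continuous_on UNIV K" unfolding K_def by (rule K_cont[OF C_inf_cont[OF zeta_smooth] ez])
  have Kpos: "K z \<ge> 0" for z using zeta_nonneg by (cases z) (auto simp: K_def zeta_eps_def)
  define B where "B = cbox (x - 2, t - 2) (x + 2, t + 2)"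
  have Ksb: "K (y - fst w, s - snd w) = 0"
    if "\<bar>y - yc\<bar> < 1" "\<bar>s - sc\<bar> < 1" "w \<notin> cbox (yc - 2, sc - 2) (yc + 2, sc + 2)" for y s yc sc w
    unfolding K_def by (rule supp_box[OF zeta_supp eps that])
  have Hint: "((\<lambda>(y',w). V (y-y') (s-w) * K (y',w)) has_integral conv2 V K y s) UNIV" for y s
  proof -
    have "((\<lambda>(y',w). V (y-y') (s-w) * K (y',w)) has_integral
           integral (cbox (y - 2, s - 2) (y + 2, s + 2)) (\<lambda>w. V (fst w) (snd w) * K (y - fst w, s - snd w))) UNIV"
      by (rule conv_box[OF cV cK], rule Ksb[where yc=y and sc=s]) auto
    then show ?thesis unfolding conv2_def using integral_unique by fastforce
  qed
  have eqF: "conv2 V K x s = integral B (\<lambda>w. Vp w * K (x - fst w, s - snd w))" if "s \<in> ball t 1" for s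
  proof -
    have "((\<lambda>(y',w). V (x-y') (s-w) * K (y',w)) has_integral
           integral B (\<lambda>w. V (fst w) (snd w) * K (x - fst w, s - snd w))) UNIV"
      unfolding B_def
      by (rule conv_box[OF cV cK], rule Ksb[where yc=x and sc=t]) (use that in \<open>auto simp: dist_real_def abs_minus_commute\<close>)
    then have "conv2 V K x s = integral B (\<lambda>w. V (fst w) (snd w) * K (x - fst w, s - snd w))"
      using Hint[of x s] by (rule has_integral_unique[symmetric])
    then show ?thesis unfolding Vp_def .
  qed
  have eqG: "conv2 V K y t = integral B (\<lambda>w. Vp w * K (y - fst w, t - snd w))" if "y \<in> ball x 1" for y
  proof -
    have "((\<lambda>(y',w). V (y-y') (t-w) * K (y',w)) has_integral
           integral B (\<lambda>w. V (fst w) (snd w) * K (y - fst w, t - snd w))) UNIV"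
      unfolding B_def
      by (rule conv_box[OF cV cK], rule Ksb[where yc=x and sc=t]) (use that in \<open>auto simp: dist_real_def abs_minus_commute\<close>)
    then have "conv2 V K y t = integral B (\<lambda>w. V (fst w) (snd w) * K (y - fst w, t - snd w))"
      using Hint[of y t] by (rule has_integral_unique[symmetric])
    then show ?thesis unfolding Vp_def .
  qed
  define F' where "F' = integral B (\<lambda>w. Vp w * (g2 ((x - fst w)/\<epsilon>, (t - snd w)/\<epsilon>) * (1/\<epsilon>) / \<epsilon>\<^sup>2))"
  define G' where "G' = integral B (\<lambda>w. Vp w * (g1 ((x - fst w)/\<epsilon>, (t - snd w)/\<epsilon>) * (1/\<epsilon>) / \<epsilon>\<^sup>2))"
  have dF: "((\<lambda>s. conv2 V K x s) has_field_derivative F') (at t)"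
  proof -
    have "((\<lambda>s. integral B (\<lambda>w. Vp w * K (x - fst w, s - snd w))) has_field_derivative F') (at t within ball t 1)"
      unfolding F'_def B_def
    proof (rule leibniz_rule_field_derivative[where fx="\<lambda>s w. Vp w * (g2 ((x - fst w)/\<epsilon>, (s - snd w)/\<epsilon>) * (1/\<epsilon>) / \<epsilon>\<^sup>2)"
          and f="\<lambda>s w. Vp w * K (x - fst w, s - snd w)" and U="ball t 1"])
      fix s w
      have "((\<lambda>s. K (x - fst w, s - snd w)) has_real_derivative g2 ((x - fst w)/\<epsilon>, (s - snd w)/\<epsilon>) * (1/\<epsilon>) / \<epsilon>\<^sup>2) (at s)"
        unfolding K_def by (rule K_dt[OF gder ez])
      then show "((\<lambda>s. Vp w * K (x - fst w, s - snd w)) has_real_derivative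
          Vp w * (g2 ((x - fst w)/\<epsilon>, (s - snd w)/\<epsilon>) * (1/\<epsilon>) / \<epsilon>\<^sup>2)) (at s within ball t 1)"
        by (rule has_field_derivative_at_within[OF DERIV_cmult])
    next
      fix s
      have "continuous_on UNIV (\<lambda>w. Vp w * K (x - fst w, s - snd w))"
      proof -
        have "continuous_on UNIV (\<lambda>w::real\<times>real. K (x - fst w, s - snd w))"
          by (rule continuous_on_compose2[OF cK]) (auto intro!: continuous_intros)
        then show ?thesis by (intro continuous_on_mult cVp)
      qed
      then show "(\<lambda>w. Vp w * K (x - fst w, s - snd w)) integrable_on cbox (x - 2, t - 2) (x + 2, t + 2)"
        by (rule integrable_continuous[OF continuous_on_subset[OF _ subset_UNIV]])
    next
      have "continuous_on UNIV (\<lambda>p::real\<times>real\<times>real. Vp (snd p) * (g2 ((x - fst (snd p))/\<epsilon>, (fst p - snd (snd p))/\<epsilon>) * (1/\<epsilon>) / \<epsilon>\<^sup>2))"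
      proof -
        have 1: "continuous_on UNIV (\<lambda>p::real\<times>real\<times>real. Vp (snd p))"
          by (rule continuous_on_compose2[OF cVp]) (auto intro!: continuous_intros)
        have 2: "continuous_on UNIV (\<lambda>p::real\<times>real\<times>real. g2 ((x - fst (snd p))/\<epsilon>, (fst p - snd (snd p))/\<epsilon>))"
          by (rule continuous_on_compose2[OF cg2]) (auto intro!: continuous_intros simp: ez)
        show ?thesis using 1 2 by (auto intro!: continuous_intros simp: ez)
      qed
      then show "continuous_on (ball t 1 \<times> cbox (x - 2, t - 2) (x + 2, t + 2))
         (\<lambda>(s, w). Vp w * (g2 ((x - fst w)/\<epsilon>, (s - snd w)/\<epsilon>) * (1/\<epsilon>) / \<epsilon>\<^sup>2))"
        unfolding case_prod_beta' by (rule continuous_on_subset) simp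
    qed auto
    then have "((\<lambda>s. integral B (\<lambda>w. Vp w * K (x - fst w, s - snd w))) has_field_derivative F') (at t)"
      using at_within_open[OF _ open_ball, of t t 1] by simp
    then show ?thesis
    proof (rule has_field_derivative_transform_within_open[OF _ open_ball])
      show "t \<in> ball t 1" by simp
    qed (rule eqF[symmetric])
  qed
  have dG: "((\<lambda>y. conv2 V K y t) has_field_derivative G') (at x)"
  proof -
    have "((\<lambda>y. integral B (\<lambda>w. Vp w * K (y - fst w, t - snd w))) has_field_derivative G') (at x within ball x 1)"
      unfolding G'_def B_def
    proof (rule leibniz_rule_field_derivative[where fx="\<lambda>y w. Vp w * (g1 ((y - fst w)/\<epsilon>, (t - snd w)/\<epsilon>) * (1/\<epsilon>) / \<epsilon>\<^sup>2)"
          and f="\<lambda>y w. Vp w * K (y - fst w, t - snd w)" and U="ball x 1"])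
      fix y w
      have "((\<lambda>y. K (y - fst w, t - snd w)) has_real_derivative g1 ((y - fst w)/\<epsilon>, (t - snd w)/\<epsilon>) * (1/\<epsilon>) / \<epsilon>\<^sup>2) (at y)"
        unfolding K_def by (rule K_dx[OF gder ez])
      then show "((\<lambda>y. Vp w * K (y - fst w, t - snd w)) has_real_derivative
          Vp w * (g1 ((y - fst w)/\<epsilon>, (t - snd w)/\<epsilon>) * (1/\<epsilon>) / \<epsilon>\<^sup>2)) (at y within ball x 1)"
        by (rule has_field_derivative_at_within[OF DERIV_cmult])
    next
      fix y
      have "continuous_on UNIV (\<lambda>w. Vp w * K (y - fst w, t - snd w))"
      proof -
        have "continuous_on UNIV (\<lambda>w::real\<times>real. K (y - fst w, t - snd w))"
          by (rule continuous_on_compose2[OF cK]) (auto intro!: continuous_intros)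
        then show ?thesis by (intro continuous_on_mult cVp)
      qed
      then show "(\<lambda>w. Vp w * K (y - fst w, t - snd w)) integrable_on cbox (x - 2, t - 2) (x + 2, t + 2)"
        by (rule integrable_continuous[OF continuous_on_subset[OF _ subset_UNIV]])
    next
      have "continuous_on UNIV (\<lambda>p::real\<times>real\<times>real. Vp (snd p) * (g1 ((fst p - fst (snd p))/\<epsilon>, (t - snd (snd p))/\<epsilon>) * (1/\<epsilon>) / \<epsilon>\<^sup>2))"
      proof -
        have 1: "continuous_on UNIV (\<lambda>p::real\<times>real\<times>real. Vp (snd p))"
          by (rule continuous_on_compose2[OF cVp]) (auto intro!: continuous_intros)
        have 2: "continuous_on UNIV (\<lambda>p::real\<times>real\<times>real. g1 ((fst p - fst (snd p))/\<epsilon>, (t - snd (snd p))/\<epsilon>))"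
          by (rule continuous_on_compose2[OF cg1]) (auto intro!: continuous_intros simp: ez)
        show ?thesis using 1 2 by (auto intro!: continuous_intros simp: ez)
      qed
      then show "continuous_on (ball x 1 \<times> cbox (x - 2, t - 2) (x + 2, t + 2))
         (\<lambda>(y, w). Vp w * (g1 ((y - fst w)/\<epsilon>, (t - snd w)/\<epsilon>) * (1/\<epsilon>) / \<epsilon>\<^sup>2))"
        unfolding case_prod_beta' by (rule continuous_on_subset) simp
    qed auto
    then have "((\<lambda>y. integral B (\<lambda>w. Vp w * K (y - fst w, t - snd w))) has_field_derivative G') (at x)"
      using at_within_open[OF _ open_ball, of x x 1] by simp
    then show ?thesis
    proof (rule has_field_derivative_transform_within_open[OF _ open_ball])
      show "x \<in> ball x 1" by simp
    qed (rule eqG[symmetric])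
  qed
  have mono: "conv2 V K (x + h * a) t \<le> conv2 V K x (t + h)" if h: "0 \<le> h" and a: "a \<in> {mu_lo..mu_hi}" for h a
  proof (rule has_integral_le[OF Hint Hint])
    fix z :: "real \<times> real"
    obtain y' w where z: "z = (y', w)" by (cases z)
    show "(\<lambda>(y', w). V (x + h * a - y') (t - w) * K (y', w)) z \<le> (\<lambda>(y', w). V (x - y') (t + h - w) * K (y', w)) z"
    proof (cases "K (y', w) = 0")
      case True then show ?thesis by (simp add: z)
    next
      case False
      then have "0 < w" "w < \<epsilon>" using K_supp[OF zeta_supp eps(1)] unfolding K_def by blast+
      then have tw: "0 \<le> t - w" using t by simp
      have "V ((x - y') + h * a) (t - w) \<le> V (x - y') ((t - w) + h)"
        unfolding V_def by (rule V_semi[OF mu lip tw h a])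
      then have "V (x + h * a - y') (t - w) \<le> V (x - y') (t + h - w)"
        by (simp add: algebra_simps)
      then show ?thesis by (simp add: z mult_right_mono[OF _ Kpos])
    qed
  qed
  have key: "a * G' \<le> F'" if a: "a \<in> {mu_lo..mu_hi}" for a
  proof (rule ccontr)
    assume "\<not> a * G' \<le> F'"
    then have neg: "F' - G' * a < 0" by (simp add: mult.commute)
    define D where "D = (\<lambda>h. conv2 V K x (t + h) - conv2 V K (x + h * a) t)"
    have d1: "((\<lambda>h. conv2 V K x (t + h)) has_real_derivative F' * 1) (at 0)"
      by (rule DERIV_chain2[where f="\<lambda>s. conv2 V K x s"]) (auto intro!: derivative_eq_intros simp: dF)
    have d2: "((\<lambda>h. conv2 V K (x + h * a) t) has_real_derivative G' * a) (at 0)"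
      by (rule DERIV_chain2[where f="\<lambda>y. conv2 V K y t"]) (auto intro!: derivative_eq_intros simp: dG)
    have "(D has_real_derivative F' - G' * a) (at 0)"
      unfolding D_def using DERIV_diff[OF d1 d2] by simp
    from DERIV_neg_dec_right[OF this neg] obtain d where d: "d > 0" "\<forall>h>0. h < d \<longrightarrow> D 0 > D (0 + h)"
      by blast
    then have "D 0 > D (d/2)" by simp
    moreover have "D 0 = 0" by (simp add: D_def)
    moreover have "D (d/2) \<ge> 0" unfolding D_def using mono[of "d/2" a] d a by simp
    ultimately show False by simp
  qed
  have "hamil mu_lo mu_hi G' \<le> F'"
    unfolding hamil_def by (rule cSUP_least) (use mu key in auto)
  moreover have "deriv (\<lambda>s. conv2 V K x s) t = F'" using dF by (rule DERIV_imp_deriv)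
  moreover have "deriv (\<lambda>y. conv2 V K y t) x = G'" using dG by (rule DERIV_imp_deriv)
  ultimately show ?thesis unfolding V_def K_def by simp
qed


end
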